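(* Let $p\ge1$, $f:\mathbb{R}^n\to\mathbb{R}$ be $p$ times continuously differentiable, $x_k\in\mathbb{R}^n$, $\sigma_k>0$, $\theta_1\ge1$, and $m_k(s)=T_{f,p}(x_k,s)+\frac{\sigma_k}{(p+1)!}\|s\|^{p+1}$. Then there exists $s_k\in\mathbb{R}^n$ such that $$m_k(s_k)\le m_k(0)\qquad\text{and}\qquad \|\nabla_s T_{f,p}(x_k,s_k)\|_{r,1}\le\theta_1\frac{\sigma_k}{p!}\|s_k\|^p.$$
   Context: $\|\cdot\|$ is an arbitrary (possibly non-smooth) norm on $\mathbb{R}^n$, $\langle\cdot,\cdot\rangle$ the Euclidean inner product, and $\|v\|_{r,1}=\max_{\|s\|=1}|\langle v,s\rangle|$ the dual norm. $T_{f,p}(x,s)=f(x)+\sum_{\ell=1}^p\frac{1}{\ell!}\nabla^\ell f(x)[s]^\ell$ is the $p$-th order Taylor expansion of $f$ at $x$; $\nabla_sT_{f,p}(x,s)$ is its gradient in $s$. *)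

theory Defs
  imports "HOL-Analysis.Analysis"
begin

definition is_norm :: "('a::euclidean_space \<Rightarrow> real) \<Rightarrow> bool" where
  "is_norm N \<longleftrightarrow> (\<forall>x. N x \<ge> 0) \<and> (\<forall>x. N x = 0 \<longleftrightarrow> x = 0)
     \<and> (\<forall>c x. N (c *\<^sub>R x) = \<bar>c\<bar> * N x) \<and> (\<forall>x y. N (x + y) \<le> N x + N y)"

definition dual_norm :: "('a::euclidean_space \<Rightarrow> real) \<Rightarrow> 'a \<Rightarrow> real" where
  "dual_norm N v = (SUP s\<in>{s. N s = 1}. \<bar>v \<bullet> s\<bar>)"

definition partial :: "'a::euclidean_space \<Rightarrow> ('a \<Rightarrow> real) \<Rightarrow> 'a \<Rightarrow> real" where
  "partial b g x = deriv (\<lambda>t. g (x + t *\<^sub>R b)) 0"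

fun Ck :: "nat \<Rightarrow> ('a::euclidean_space \<Rightarrow> real) \<Rightarrow> bool" where
  "Ck 0 g = continuous_on UNIV g"
| "Ck (Suc k) g = (continuous_on UNIV g
      \<and> (\<forall>b\<in>Basis. \<forall>x. (\<lambda>t. g (x + t *\<^sub>R b)) differentiable (at 0))
      \<and> (\<forall>b\<in>Basis. Ck k (partial b g)))"

text \<open>The l-th derivative tensor applied to s l times:
  sum over i1..il of d_{i1}...d_{il} f(x) s_{i1} ... s_{il}.\<close>
definition dtensor :: "nat \<Rightarrow> ('a::euclidean_space \<Rightarrow> real) \<Rightarrow> 'a \<Rightarrow> 'a \<Rightarrow> real" where
  "dtensor l f x s = (\<Sum>bs\<in>{bs. set bs \<subseteq> Basis \<and> length bs = l}.
       foldr partial bs f x * (\<Prod>b\<leftarrow>bs. s \<bullet> b))"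

definition taylor :: "('a::euclidean_space \<Rightarrow> real) \<Rightarrow> nat \<Rightarrow> 'a \<Rightarrow> 'a \<Rightarrow> real" where
  "taylor f p x s = f x + (\<Sum>l=1..p. dtensor l f x s / fact l)"

end

theory Submission
  imports Defs
begin

lemma prodlist_diff:
  "(\<lambda>s::'a::euclidean_space. \<Prod>b\<leftarrow>bs. s \<bullet> b) differentiable (at x)"
  by (induction bs) (auto intro!: derivative_intros)

lemma taylor_diff: "(taylor f p x) differentiable (at s)"
  unfolding taylor_def dtensor_def
  by (auto intro!: derivative_intros prodlist_diff finite_lists_length_eq simp: divide_inverse)

lemma grad_exists:
  fixes T :: "'a::euclidean_space \<Rightarrow> real"
  assumes "T differentiable (at x)"
  shows "\<exists>g. GDERIV T x :> g"
proof -
  obtain f' where d: "(T has_derivative f') (at x)" using assms differentiable_def by blast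
  have lin: "linear f'" using d has_derivative_linear by blast
  define g where "g = (\<Sum>b\<in>Basis. f' b *\<^sub>R b)"
  have "f' h = h \<bullet> g" for h
  proof -
    have "f' h = f' (\<Sum>b\<in>Basis. (h \<bullet> b) *\<^sub>R b)" by (simp add: euclidean_representation)
    also have "\<dots> = (\<Sum>b\<in>Basis. (h \<bullet> b) * f' b)"
      using lin by (simp add: linear_sum linear_scale o_def)
    also have "\<dots> = h \<bullet> g" unfolding g_def by (simp add: inner_sum_right mult.commute)
    finally show ?thesis .
  qed
  then have "f' = (\<lambda>h. h \<bullet> g)" by auto
  with d show ?thesis unfolding gderiv_def by blast
qed

lemma N0: "is_norm N \<Longrightarrow> N 0 = 0" unfolding is_norm_def by auto
lemma Nneg: "is_norm N \<Longrightarrow> N (- x) = N x"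
  unfolding is_norm_def by (metis abs_minus_cancel abs_one mult_1 scaleR_minus1_left)
lemma Nscale: "is_norm N \<Longrightarrow> N (c *\<^sub>R x) = \<bar>c\<bar> * N x" unfolding is_norm_def by auto
lemma Ntri: "is_norm N \<Longrightarrow> N (x + y) \<le> N x + N y" unfolding is_norm_def by auto
lemma Npos: "is_norm N \<Longrightarrow> N x \<ge> 0" unfolding is_norm_def by auto
lemma Nzero: "is_norm N \<Longrightarrow> N x = 0 \<longleftrightarrow> x = 0" unfolding is_norm_def by auto

lemma Nsum: assumes "is_norm N" "finite S" shows "N (sum g S) \<le> (\<Sum>i\<in>S. N (g i))"
  using assms(2)
proof (induction S rule: finite_induct)
  case empty then show ?case using Nzero[OF assms(1), of 0] by simp
next
  case (insert a S)
  then show ?case using Ntri[OF assms(1), of "g a" "sum g S"] by simp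
qed

lemma Nupper:
  fixes N :: "'a::euclidean_space \<Rightarrow> real"
  assumes "is_norm N"
  shows "N x \<le> (\<Sum>b\<in>Basis. N b) * norm x"
proof -
  have "N x = N (\<Sum>b\<in>Basis. (x \<bullet> b) *\<^sub>R b)" by (simp add: euclidean_representation)
  also have "\<dots> \<le> (\<Sum>b\<in>Basis. N ((x \<bullet> b) *\<^sub>R b))" by (rule Nsum[OF assms]) simp
  also have "\<dots> = (\<Sum>b\<in>Basis. \<bar>x \<bullet> b\<bar> * N b)" using Nscale[OF assms] by simp
  also have "\<dots> \<le> (\<Sum>b\<in>Basis. norm x * N b)"
    by (intro sum_mono mult_right_mono Basis_le_norm Npos[OF assms]) auto
  also have "\<dots> = (\<Sum>b\<in>Basis. N b) * norm x" by (simp add: sum_distrib_left mult.commute)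
  finally show ?thesis .
qed

lemma Ncont:
  fixes N :: "'a::euclidean_space \<Rightarrow> real"
  assumes "is_norm N"
  shows "continuous_on UNIV N"
proof -
  define M where "M = (\<Sum>b\<in>Basis. N b)"
  have M0: "0 \<le> M" unfolding M_def by (intro sum_nonneg Npos[OF assms])
  have "dist (N x) (N y) \<le> M * dist x y" for x y
  proof -
    have a: "N x \<le> N y + N (x - y)" using Ntri[OF assms, of y "x - y"] by simp
    have b: "N y \<le> N x + N (y - x)" using Ntri[OF assms, of x "y - x"] by simp
    have c: "N (y - x) = N (x - y)" using Nneg[OF assms, of "x - y"] by simp
    have "N (x - y) \<le> M * norm (x - y)" using Nupper[OF assms] M_def by blast
    then show ?thesis using a b c by (simp add: dist_real_def dist_norm abs_le_iff)
  qed
  then have "M-lipschitz_on UNIV N" using M0 by (auto intro: lipschitz_onI)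
  then show ?thesis by (rule lipschitz_on_continuous_on)
qed

lemma Nlower:
  fixes N :: "'a::euclidean_space \<Rightarrow> real"
  assumes "is_norm N"
  shows "\<exists>c>0. \<forall>x. c * norm x \<le> N x"
proof -
  obtain b :: 'a where b: "b \<in> Basis" using nonempty_Basis by blast
  have ne: "sphere (0::'a) 1 \<noteq> {}" using b by (auto intro!: exI[of _ b])
  obtain x0 where x0: "x0 \<in> sphere 0 1" and mn: "\<forall>y\<in>sphere 0 1. N x0 \<le> N y"
    using continuous_attains_inf[OF compact_sphere ne continuous_on_subset[OF Ncont[OF assms]]]
    by blast
  have "x0 \<noteq> 0" using x0 by auto
  then have c: "N x0 > 0" using Npos[OF assms, of x0] Nzero[OF assms, of x0] by linarith
  have "N x0 * norm x \<le> N x" for x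
  proof (cases "x = 0")
    case True then show ?thesis by (simp add: N0[OF assms])
  next
    case False
    then have "(1 / norm x) *\<^sub>R x \<in> sphere 0 1" by auto
    then have "N x0 \<le> N ((1 / norm x) *\<^sub>R x)" using mn by blast
    also have "\<dots> = N x / norm x" using Nscale[OF assms] by simp
    finally show ?thesis using False by (simp add: field_simps)
  qed
  with c show ?thesis by blast
qed

lemma prod_bound:
  fixes s :: "'a::euclidean_space"
  shows "set bs \<subseteq> Basis \<Longrightarrow> \<bar>\<Prod>b\<leftarrow>bs. s \<bullet> b\<bar> \<le> norm s ^ length bs"
proof (induction bs)
  case Nil then show ?case by simp
next
  case (Cons b bs)
  then have "\<bar>s \<bullet> b\<bar> \<le> norm s" by (simp add: Basis_le_norm)
  then show ?case using Cons by (simp add: abs_mult mult_mono)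
qed

lemma dtensor_bound:
  fixes s :: "'a::euclidean_space"
  shows "\<bar>dtensor l f x s\<bar> \<le>
    (\<Sum>bs\<in>{bs. set bs \<subseteq> (Basis::'a set) \<and> length bs = l}. \<bar>foldr partial bs f x\<bar>) * norm s ^ l"
proof -
  let ?B = "{bs. set bs \<subseteq> (Basis::'a set) \<and> length bs = l}"
  have "\<bar>dtensor l f x s\<bar> \<le> (\<Sum>bs\<in>?B. \<bar>foldr partial bs f x * (\<Prod>b\<leftarrow>bs. s \<bullet> b)\<bar>)"
    unfolding dtensor_def by (rule sum_abs)
  also have "\<dots> \<le> (\<Sum>bs\<in>?B. \<bar>foldr partial bs f x\<bar> * norm s ^ l)"
    by (intro sum_mono) (auto simp: abs_mult intro!: mult_left_mono prod_bound[of _ s, simplified])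
  also have "\<dots> = (\<Sum>bs\<in>?B. \<bar>foldr partial bs f x\<bar>) * norm s ^ l" by (simp add: sum_distrib_right)
  finally show ?thesis .
qed

lemma dtensor_zero: assumes "l \<ge> 1" shows "dtensor l f x (0::'a::euclidean_space) = 0"
  unfolding dtensor_def
proof (rule sum.neutral, rule ballI)
  fix bs :: "'a list" assume "bs \<in> {bs. set bs \<subseteq> Basis \<and> length bs = l}"
  then obtain b bs' where "bs = b # bs'" using assms by (cases bs) auto
  then show "foldr partial bs f x * (\<Prod>b\<leftarrow>bs. 0 \<bullet> b) = 0" by simp
qed


lemma taylor_bound:
  fixes s :: "'a::euclidean_space"
  assumes "norm s \<ge> 1"
  shows "\<bar>taylor f p x s - f x\<bar> \<le>
     (\<Sum>l=1..p. (\<Sum>bs\<in>{bs. set bs \<subseteq> (Basis::'a set) \<and> length bs = l}. \<bar>foldr partial bs f x\<bar>) / fact l) * norm s ^ p"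
proof -
  define C where "C l = (\<Sum>bs\<in>{bs. set bs \<subseteq> (Basis::'a set) \<and> length bs = l}. \<bar>foldr partial bs f x\<bar>)" for l
  have C0: "C l \<ge> 0" for l unfolding C_def by (simp add: sum_nonneg)
  have "\<bar>taylor f p x s - f x\<bar> = \<bar>\<Sum>l=1..p. dtensor l f x s / fact l\<bar>" by (simp add: taylor_def)
  also have "\<dots> \<le> (\<Sum>l=1..p. \<bar>dtensor l f x s / fact l\<bar>)" by (rule sum_abs)
  also have "\<dots> \<le> (\<Sum>l=1..p. C l / fact l * norm s ^ p)"
  proof (rule sum_mono)
    fix l assume l: "l \<in> {1..p}"
    have "\<bar>dtensor l f x s / fact l\<bar> = \<bar>dtensor l f x s\<bar> / fact l" by simp
    also have "\<dots> \<le> C l * norm s ^ l / fact l"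
      using dtensor_bound[of l f x s] unfolding C_def by (simp add: divide_right_mono)
    also have "\<dots> \<le> C l * norm s ^ p / fact l"
      using l assms C0 by (intro divide_right_mono mult_left_mono power_increasing) auto
    finally show "\<bar>dtensor l f x s / fact l\<bar> \<le> C l / fact l * norm s ^ p" by simp
  qed
  also have "\<dots> = (\<Sum>l=1..p. C l / fact l) * norm s ^ p" by (simp add: sum_distrib_right)
  finally show ?thesis unfolding C_def .
qed

theorem corollary2p3:
  fixes N :: "'a::euclidean_space \<Rightarrow> real"
    and f :: "'a \<Rightarrow> real" and p :: nat and xk :: 'a and \<sigma> \<theta>1 :: real
  assumes "is_norm N" and "p \<ge> 1" and "Ck p f" and "\<sigma> > 0" and "\<theta>1 \<ge> 1"
  shows "\<exists>sk g. taylor f p xk sk + \<sigma> / fact (p + 1) * N sk ^ (p + 1)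
                 \<le> taylor f p xk 0 + \<sigma> / fact (p + 1) * N 0 ^ (p + 1)
            \<and> GDERIV (\<lambda>s. taylor f p xk s) sk :> g
            \<and> dual_norm N g \<le> \<theta>1 * (\<sigma> / fact p) * N sk ^ p"
proof -
  note nN = assms(1)
  define T where "T = taylor f p xk"
  define a where "a = \<sigma> / fact (p + 1)"
  have a0: "a > 0" unfolding a_def using assms(4) by simp
  define m where "m s = T s + a * N s ^ (p + 1)" for s
  have T0: "T 0 = f xk" unfolding T_def taylor_def by (simp add: dtensor_zero)
  have m0: "m 0 = f xk" unfolding m_def using T0 N0[OF nN] by simp
  obtain c where c0: "c > 0" and c: "\<And>x. c * norm x \<le> N x" using Nlower[OF nN] by blast
  define C where "C = (\<Sum>l=1..p. (\<Sum>bs\<in>{bs. set bs \<subseteq> (Basis::'a set) \<and> length bs = l}. \<bar>foldr partial bs f xk\<bar>) / fact l)"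
  have Tb: "norm s \<ge> 1 \<Longrightarrow> \<bar>T s - f xk\<bar> \<le> C * norm s ^ p" for s
    unfolding T_def C_def by (rule taylor_bound)
  define K where "K = a * c ^ (p + 1)"
  have K0: "K > 0" unfolding K_def using a0 c0 by simp
  define R where "R = max 1 (C / K + 1)"
  have coer: "m s > m 0" if "norm s > R" for s
  proof -
    define r where "r = norm s"
    have r1: "r \<ge> 1" "r > C / K" using that unfolding R_def r_def by auto
    have "K * r > C" using r1(2) K0 by (simp add: pos_divide_less_eq mult.commute)
    then have pos: "r ^ p * (K * r - C) > 0" using r1 by simp
    have "(c * r) ^ (p + 1) \<le> N s ^ (p + 1)"
      using c[of s] c0 r1 unfolding r_def by (intro power_mono) auto
    then have "a * (c * r) ^ (p + 1) \<le> a * N s ^ (p + 1)" using a0 by simp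
    moreover have "a * (c * r) ^ (p + 1) = K * r * r ^ p"
      unfolding K_def by (simp add: power_mult_distrib)
    moreover have "T s \<ge> f xk - C * r ^ p" using Tb[of s] r1 unfolding r_def by simp
    ultimately have "m s \<ge> f xk + (K * r * r ^ p - C * r ^ p)"
      unfolding m_def by linarith
    moreover have "r ^ p * (K * r - C) = K * r * r ^ p - C * r ^ p" by (simp add: algebra_simps)
    ultimately have "m s \<ge> f xk + r ^ p * (K * r - C)" by simp
    then show ?thesis using pos m0 by simp
  qed
  have Tdiff: "\<And>s. T differentiable (at s)" unfolding T_def by (rule taylor_diff)
  have Tcont: "continuous_on UNIV T"
    using Tdiff by (simp add: continuous_at_imp_continuous_on differentiable_imp_continuous_within)
  have mcont: "continuous_on UNIV m"
    unfolding m_def by (intro continuous_intros Tcont Ncont[OF nN])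
  obtain sk where skin: "sk \<in> cball 0 R" and skmin: "\<forall>y\<in>cball 0 R. m sk \<le> m y"
    using continuous_attains_inf[OF compact_cball, of 0 R m] continuous_on_subset[OF mcont]
    unfolding R_def by force
  have gmin: "m sk \<le> m y" for y
  proof (cases "norm y \<le> R")
    case True then show ?thesis using skmin by simp
  next
    case False
    have "0 \<in> cball (0::'a) R" unfolding R_def by simp
    then have "m sk \<le> m 0" using skmin by blast
    then show ?thesis using coer[of y] False by simp
  qed
  obtain g where g: "GDERIV T sk :> g" using grad_exists[OF Tdiff] by blast
  define Ks where "Ks = \<sigma> / fact p * N sk ^ p"
  have afac: "a * real (p + 1) = \<sigma> / fact p"
  proof -
    have fp: "fact p > (0::real)" by simp
    have "fact (p + 1) = real (p + 1) * (fact p :: real)" by (simp add: fact_Suc)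
    moreover have n0: "real (p + 1) \<noteq> 0" by simp
    ultimately show ?thesis unfolding a_def
      by (metis mult.commute nonzero_mult_divide_mult_cancel_left times_divide_eq_left)
  qed
  have foc: "- (g \<bullet> d) \<le> Ks * N d" for d
  proof (rule ccontr)
    assume "\<not> ?thesis"
    then have Dneg: "g \<bullet> d + Ks * N d < 0" by simp
    define \<phi> where "\<phi> t = T (sk + t *\<^sub>R d) + a * (N sk + t * N d) ^ (p + 1)" for t
    have line: "((\<lambda>t. sk + t *\<^sub>R d) has_derivative (\<lambda>t. t *\<^sub>R d)) (at (0::real))"
      by (auto intro!: derivative_eq_intros)
    have gd: "(T has_derivative (\<lambda>h. h \<bullet> g)) (at (sk + 0 *\<^sub>R d))"
      using g unfolding gderiv_def by simp
    have "((\<lambda>t. T (sk + t *\<^sub>R d)) has_derivative (\<lambda>t. (t *\<^sub>R d) \<bullet> g)) (at 0)"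
      using has_derivative_compose[OF line gd] by simp
    moreover have "(\<lambda>t. (t *\<^sub>R d) \<bullet> g) = (*) (g \<bullet> d)" by (auto simp: inner_commute)
    ultimately have d1: "((\<lambda>t. T (sk + t *\<^sub>R d)) has_field_derivative (g \<bullet> d)) (at 0)"
      by (simp add: has_field_derivative_def)
    have d2: "((\<lambda>t. a * (N sk + t * N d) ^ (p + 1)) has_field_derivative
               Ks * N d) (at 0)"
    proof -
      have l: "((\<lambda>t. N sk + t * N d) has_field_derivative N d) (at (0::real))"
        by (auto intro!: derivative_eq_intros)
      have raw: "((\<lambda>t. a * (N sk + t * N d) ^ (p + 1)) has_field_derivative
             a * (of_nat (p + 1) * (N d * (N sk + 0 * N d) ^ (p + 1 - Suc 0)))) (at 0)"
        by (rule DERIV_cmult[OF DERIV_power[OF l]])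
      have eq: "a * (of_nat (p + 1) * (N d * (N sk + 0 * N d) ^ (p + 1 - Suc 0))) = Ks * N d"
        unfolding Ks_def afac[symmetric] by (simp add: mult_ac)
      show ?thesis using raw unfolding eq .
    qed
    have dphi: "(\<phi> has_field_derivative (g \<bullet> d + Ks * N d)) (at 0)"
      using DERIV_add[OF d1 d2] unfolding \<phi>_def by simp
    then obtain \<delta> where \<delta>: "\<delta> > 0" "\<forall>h>0. h < \<delta> \<longrightarrow> \<phi> 0 > \<phi> (0 + h)"
      using DERIV_neg_dec_right[OF dphi Dneg] by blast
    define h where "h = \<delta> / 2"
    have h: "h > 0" "h < \<delta>" using \<delta> unfolding h_def by auto
    then have lt: "\<phi> h < \<phi> 0" using \<delta> by auto
    have "\<phi> 0 = m sk" unfolding \<phi>_def m_def by simp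
    have "N (sk + h *\<^sub>R d) \<le> N sk + h * N d"
      using Ntri[OF nN, of sk "h *\<^sub>R d"] Nscale[OF nN, of h d] h by simp
    then have "N (sk + h *\<^sub>R d) ^ (p + 1) \<le> (N sk + h * N d) ^ (p + 1)"
      using Npos[OF nN] by (intro power_mono) auto
    then have "m (sk + h *\<^sub>R d) \<le> \<phi> h" unfolding m_def \<phi>_def using a0 by simp
    then show False using gmin[of "sk + h *\<^sub>R d"] lt \<open>\<phi> 0 = m sk\<close> by simp
  qed
  have ne: "{s. N s = 1} \<noteq> {}"
  proof -
    obtain b :: 'a where b: "b \<in> Basis" using nonempty_Basis by blast
    then have "b \<noteq> 0" by auto
    then have Nb: "N b > 0" using Npos[OF nN, of b] Nzero[OF nN, of b] by linarith
    have "N ((1 / N b) *\<^sub>R b) = 1" using Nscale[OF nN] Nb by simp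
    then show ?thesis by blast
  qed
  have "dual_norm N g \<le> Ks"
    unfolding dual_norm_def
  proof (rule cSUP_least[OF ne])
    fix d assume "d \<in> {s. N s = 1}"
    then have Nd: "N d = 1" by simp
    have "- (g \<bullet> d) \<le> Ks" using foc[of d] Nd by simp
    moreover have "- (g \<bullet> (- d)) \<le> Ks" using foc[of "- d"] Nd Nneg[OF nN, of d] by simp
    ultimately show "\<bar>g \<bullet> d\<bar> \<le> Ks" by (simp add: abs_le_iff)
  qed
  moreover have "Ks \<ge> 0" unfolding Ks_def using assms(4) Npos[OF nN] by simp
  ultimately have dn: "dual_norm N g \<le> \<theta>1 * (\<sigma> / fact p) * N sk ^ p"
  proof -
    assume A: "dual_norm N g \<le> Ks" "Ks \<ge> 0"
    have "1 * Ks \<le> \<theta>1 * Ks" using A(2) assms(5) by (rule mult_right_mono[rotated])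
    moreover have "\<theta>1 * Ks = \<theta>1 * (\<sigma> / fact p) * N sk ^ p" by (simp add: Ks_def mult.assoc)
    ultimately show ?thesis using A(1) by linarith
  qed
  have "m sk \<le> m 0" using gmin by blast
  then have "taylor f p xk sk + \<sigma> / fact (p + 1) * N sk ^ (p + 1)
                 \<le> taylor f p xk 0 + \<sigma> / fact (p + 1) * N 0 ^ (p + 1)"
    unfolding m_def T_def a_def .
  moreover have "GDERIV (\<lambda>s. taylor f p xk s) sk :> g" using g unfolding T_def by simp
  ultimately show ?thesis using dn by blast
qed

end
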